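(* Let $P=[0,1]$, let $r$ be a positive integer, let $\sigma_r=\sum_{i=r+1}^{2r+1}\frac1i$, and let $Q=\{q_1,\dots,q_r\}$ with $q_i=\frac{1}{\sigma_r}\sum_{j=r+1}^{r+i}\frac1j$ for $i\in[r]$ (so the $r+1$ intervals cut from $[0,1]$ by $Q$ have lengths proportional to $\frac1{r+1}:\frac1{r+2}:\dots:\frac1{2r+1}$). Let $\tau$ be any ordering of $Q$. Consider the online algorithm that maintains a set $\hat Q$ of positions ever used, each labelled occupied or vacant (initially empty); when a point departs its position becomes vacant; when a point arrives, if some position in $\hat Q$ is vacant the point is put at an arbitrary vacant position (now occupied); otherwise, if $Q\not\subseteq\hat Q$ the point is put at the first position of $Q\setminus\hat Q$ according to $\tau$, and if $Q\subseteq\hat Q$ it is put at the midpoint of a largest interval into which $[0,1]$ is divided by $\hat Q$; in both latter cases the new position is added to $\hat Q$ as occupied. Then for every instance $S$ whose maximum number $m$ of simultaneously present points satisfies $m>r$, we have $OPT_A(S;P)\le 2\sigma_r\cdot\min_{t\le T}d_{min}(t;X)$, where $X$ is the algorithm's output.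
   Context: Distances are Euclidean; $\partial P=\{0,1\}$. An instance is a sequence $S=((s_1,d_1),\dots,(s_n,d_n))$ with $s_i<d_i$, $0=s_1\le\dots\le s_n$; point $i$ is present at time $t$ iff $s_i\le t\le d_i$; $T=\max_i d_i$; $m=\max_{t\le T}|\{i:s_i\le t\le d_i\}|$. For locations $X=(X_1,\dots,X_n)\in P^n$, $d_{min}(t;X)=\min\{dis(X_i,\partial P),dis(X_i,X_j)\}$ over present points $i\ne j$ at time $t$, and $OPT_A(S;P)=\max_X\min_{t\le T}d_{min}(t;X)$. The algorithm is online: it places each arriving point irrevocably without knowing future events; events are chosen by an adaptive adversary. *)

theory Defs
  imports Complex_Main "HOL-Library.Extended_Real"
begin

text \<open>Points are indexed 0..<n (paper index i corresponds to i-1).\<close>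

definition sigma_r :: "nat \<Rightarrow> real" where
  "sigma_r r = (\<Sum>i=r+1..2*r+1. 1 / real i)"

definition qpt :: "nat \<Rightarrow> nat \<Rightarrow> real" where
  "qpt r i = (\<Sum>j=r+1..r+i. 1 / real j) / sigma_r r"

definition Qset :: "nat \<Rightarrow> real set" where
  "Qset r = qpt r ` {1..r}"

definition is_instance :: "nat \<Rightarrow> (nat \<Rightarrow> real) \<Rightarrow> (nat \<Rightarrow> real) \<Rightarrow> bool" where
  "is_instance n s d \<longleftrightarrow> n \<ge> 1 \<and> s 0 = 0 \<and>
     (\<forall>i j. i \<le> j \<and> j < n \<longrightarrow> s i \<le> s j) \<and> (\<forall>i<n. s i < d i)"

definition present :: "nat \<Rightarrow> (nat \<Rightarrow> real) \<Rightarrow> (nat \<Rightarrow> real) \<Rightarrow> real \<Rightarrow> nat set" where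
  "present n s d t = {i. i < n \<and> s i \<le> t \<and> t \<le> d i}"

definition horizon :: "nat \<Rightarrow> (nat \<Rightarrow> real) \<Rightarrow> real" where
  "horizon n d = Max (d ` {..<n})"

definition maxload :: "nat \<Rightarrow> (nat \<Rightarrow> real) \<Rightarrow> (nat \<Rightarrow> real) \<Rightarrow> nat" where
  "maxload n s d = Max {card (present n s d t) | t. t \<le> horizon n d}"

text \<open>Minimum distance at time t (in ereal; empty minimum = \<infinity>).
  The distance of x to the boundary {0,1} of P is min |x - 0| |x - 1|.\<close>
definition dmin :: "nat \<Rightarrow> (nat \<Rightarrow> real) \<Rightarrow> (nat \<Rightarrow> real) \<Rightarrow> real \<Rightarrow> (nat \<Rightarrow> real) \<Rightarrow> ereal" where
  "dmin n s d t X = Inf (ereal `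
     ({min \<bar>X i - 0\<bar> \<bar>X i - 1\<bar> | i. i \<in> present n s d t} \<union>
      {\<bar>X i - X j\<bar> | i j. i \<in> present n s d t \<and> j \<in> present n s d t \<and> i \<noteq> j}))"

definition objective :: "nat \<Rightarrow> (nat \<Rightarrow> real) \<Rightarrow> (nat \<Rightarrow> real) \<Rightarrow> (nat \<Rightarrow> real) \<Rightarrow> ereal" where
  "objective n s d X = (INF t\<in>{..horizon n d}. dmin n s d t X)"

definition OPT_A :: "nat \<Rightarrow> (nat \<Rightarrow> real) \<Rightarrow> (nat \<Rightarrow> real) \<Rightarrow> ereal" where
  "OPT_A n s d = (SUP X\<in>{X. \<forall>i<n. X i \<in> {0..1}}. objective n s d X)"

definition gap_interval :: "real set \<Rightarrow> real \<Rightarrow> real \<Rightarrow> bool" where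
  "gap_interval U a b \<longleftrightarrow> a < b \<and> a \<in> U \<union> {0,1} \<and> b \<in> U \<union> {0,1} \<and>
     (\<forall>u\<in>U. \<not> (a < u \<and> u < b))"

definition largest_gap :: "real set \<Rightarrow> real \<Rightarrow> real \<Rightarrow> bool" where
  "largest_gap U a b \<longleftrightarrow> gap_interval U a b \<and>
     (\<forall>a' b'. gap_interval U a' b' \<longrightarrow> b' - a' \<le> b - a)"

text \<open>X is a possible output of the (nondeterministic) online algorithm with ordering tau of Q.
  When point k arrives (time s k), the used positions are those of earlier points; a used
  position is occupied iff an earlier point still present at time s k lies there
  (point i is present at s k iff s k \<le> d i, presence intervals being closed).\<close>
definition alg_run :: "nat \<Rightarrow> real list \<Rightarrow> nat \<Rightarrow> (nat \<Rightarrow> real) \<Rightarrow> (nat \<Rightarrow> real) \<Rightarrow> (nat \<Rightarrow> real) \<Rightarrow> bool" where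
  "alg_run r tau n s d X \<longleftrightarrow> (\<forall>k<n.
     (let U = X ` {..<k};
          Occ = X ` {i. i < k \<and> s k \<le> d i};
          Vac = U - Occ
      in if Vac \<noteq> {} then X k \<in> Vac
         else if \<not> Qset r \<subseteq> U then X k = hd (filter (\<lambda>q. q \<notin> U) tau)
         else (\<exists>a b. largest_gap U a b \<and> X k = (a + b) / 2)))"

end

theory Submission
  imports Defs
begin


lemma sigma_pos: "r > 0 \<Longrightarrow> sigma_r r > 0"
  unfolding sigma_r_def by (intro sum_pos) auto

lemma qpt_0: "qpt r 0 = 0" unfolding qpt_def by simp

lemma qpt_last: "r > 0 \<Longrightarrow> qpt r (r+1) = 1"
proof -
  assume "r > 0"
  have "r + (r+1) = 2*r+1" by simp
  then have "qpt r (r+1) = sigma_r r / sigma_r r" unfolding qpt_def sigma_r_def by (metis add.commute)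
  then show ?thesis using sigma_pos[OF \<open>r>0\<close>] by simp
qed

lemma qpt_Suc: "qpt r (Suc i) = qpt r i + (1 / real (r + Suc i)) / sigma_r r"
  unfolding qpt_def by (simp add: add_divide_distrib)

lemma qpt_strict: assumes "r > 0" "i < j" shows "qpt r i < qpt r j"
  using assms(2)
proof (induction j)
  case 0 then show ?case by simp
next
  case (Suc j)
  have "qpt r j < qpt r (Suc j)" using sigma_pos[OF assms(1)] by (simp add: qpt_Suc)
  show ?case
  proof (cases "i = j")
    case True then show ?thesis using \<open>qpt r j < _\<close> by simp
  next
    case False then show ?thesis using Suc \<open>qpt r j < _\<close> by simp
  qed
qed

lemma qpt_mono_iff: "r > 0 \<Longrightarrow> qpt r i < qpt r j \<longleftrightarrow> i < j"
  using qpt_strict by (metis not_less_iff_gr_or_eq order_less_asym)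

lemma qpt_le_iff: "r > 0 \<Longrightarrow> qpt r i \<le> qpt r j \<longleftrightarrow> i \<le> j"
  using qpt_mono_iff by (metis not_le)

lemma qpt_inj: "r > 0 \<Longrightarrow> qpt r i = qpt r j \<longleftrightarrow> i = j"
  using qpt_le_iff by (metis order.antisym order_refl)

lemma seg_len: "qpt r j - qpt r (j-1) = 1 / (real (r + j) * sigma_r r)" if "j \<ge> 1"
  using that qpt_Suc[of r "j-1"] by simp

definition cgap :: "real set \<Rightarrow> real \<Rightarrow> real \<Rightarrow> bool" where
  "cgap S a b \<longleftrightarrow> a < b \<and> a \<in> S \<and> b \<in> S \<and> (\<forall>u\<in>S. \<not> (a < u \<and> u < b))"

lemma gap_exists:
  assumes "finite S" "a \<in> S" "b \<in> S" "a < b"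
  shows "\<exists>b'. cgap S a b' \<and> b' \<le> b"
proof -
  let ?T = "{w\<in>S. a < w}"
  have fin: "finite ?T" using assms by simp
  have ne: "b \<in> ?T" using assms by simp
  define b' where "b' = Min ?T"
  have "b' \<in> ?T" unfolding b'_def using fin ne Min_in by blast
  moreover have "\<forall>w\<in>?T. b' \<le> w" unfolding b'_def using fin by simp
  ultimately have "cgap S a b'" unfolding cgap_def using assms by force
  moreover have "b' \<le> b" using \<open>\<forall>w\<in>?T. b' \<le> w\<close> ne by blast
  ultimately show ?thesis by blast
qed

lemma gap_exists_below:
  assumes "finite S" "a \<in> S" "b \<in> S" "a < b"
  shows "\<exists>a'. cgap S a' b \<and> a \<le> a'"
proof -
  let ?T = "{w\<in>S. w < b}"
  have fin: "finite ?T" using assms by simp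
  have ne: "a \<in> ?T" using assms by simp
  define a' where "a' = Max ?T"
  have "a' \<in> ?T" unfolding a'_def using fin ne Max_in by blast
  moreover have "\<forall>w\<in>?T. w \<le> a'" unfolding a'_def using fin by simp
  ultimately have "cgap S a' b" unfolding cgap_def using assms by force
  moreover have "a \<le> a'" using \<open>\<forall>w\<in>?T. w \<le> a'\<close> ne by blast
  ultimately show ?thesis by blast
qed


lemma gap_count:
  assumes "finite S" "A \<in> S" "B \<in> S" "A < B" "S \<subseteq> {A..B}"
    and "\<And>a b. cgap S a b \<Longrightarrow> b - a \<le> L"
  shows "B - A \<le> (real (card S) - 1) * L"
  using assms
proof (induction "card S" arbitrary: S B rule: less_induct)
  case less
  let ?S' = "S - {B}"
  have fin': "finite ?S'" using less.prems(1) by simp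
  have A': "A \<in> ?S'" using less.prems(2,4) by auto
  define B' where "B' = Max ?S'"
  have B'in: "B' \<in> ?S'" unfolding B'_def by (rule Max_in[OF fin']) (use A' in blast)
  have B'max: "\<forall>w\<in>?S'. w \<le> B'" unfolding B'_def using Max_ge[OF fin'] by blast
  have "A \<le> B'" using B'max A' by blast
  have "B' \<in> S" using B'in by blast
  then have "B' \<le> B" using less.prems(5) by (meson atLeastAtMost_iff subsetD)
  then have "B' < B" using B'in by auto
  have "\<forall>u\<in>S. \<not> (B' < u \<and> u < B)"
  proof (intro ballI notI)
    fix u assume "u \<in> S" "B' < u \<and> u < B"
    then have "u \<in> ?S'" by auto
    then have "u \<le> B'" using B'max by blast
    then show False using \<open>B' < u \<and> u < B\<close> by linarith
  qed
  then have cg: "cgap S B' B" unfolding cgap_def using \<open>B' \<in> S\<close> \<open>B' < B\<close> less.prems(3) by blast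
  then have L1: "B - B' \<le> L" using less.prems(6) by blast
  have cardS: "card S = card ?S' + 1" using less.prems(1,3) card_Suc_Diff1 by fastforce
  show ?case
  proof (cases "A = B'")
    case True
    have "\<forall>w\<in>?S'. w = A" using B'max less.prems(5) True by (meson atLeastAtMost_iff order.antisym subsetD DiffD1)
    then have "?S' \<subseteq> {A}" by blast
    then have "?S' = {A}" using A' by blast
    then have "card S = 2" using cardS by simp
    then show ?thesis using L1 True by simp
  next
    case False
    then have "A < B'" using \<open>A \<le> B'\<close> by simp
    have sub: "?S' \<subseteq> {A..B'}" using B'max less.prems(5) by (meson atLeastAtMost_iff subsetD DiffD1 subsetI)
    have H: "\<And>a b. cgap ?S' a b \<Longrightarrow> b - a \<le> L"
    proof -
      fix a b assume "cgap ?S' a b"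
      then have "b \<le> B'" using B'max unfolding cgap_def by auto
      then have "cgap S a b" using \<open>cgap ?S' a b\<close> \<open>B' < B\<close> unfolding cgap_def by auto
      then show "b - a \<le> L" using less.prems(6) by blast
    qed
    have lt: "card ?S' < card S" using cardS by simp
    have "B' - A \<le> (real (card ?S') - 1) * L"
      by (rule less.hyps[OF lt fin' A' B'in \<open>A < B'\<close> sub H])
    then show ?thesis using L1 cardS by (simp add: algebra_simps)
  qed
qed



lemma pow2_ge: "(2::real)^a > 2^b \<Longrightarrow> a > b"
  by (metis not_less power_increasing_iff one_less_numeral_iff semiring_norm(76) less_le_not_le)

lemma pow_sum:
  fixes r :: nat and z :: real and E :: "nat \<Rightarrow> nat"
  assumes H: "\<And>j. j \<in> {1..r+1} \<Longrightarrow> z \<le> (2::real)^(E j) * real (r+j)"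
  shows "z \<le> (\<Sum>j=1..r+1. (2::real)^(E j))"
proof (cases "z \<le> real r + 1")
  case True
  have "(\<Sum>j=1..r+1. (1::real)) \<le> (\<Sum>j=1..r+1. (2::real)^(E j))"
    by (intro sum_mono) simp
  then show ?thesis using True by simp
next
  case False
  obtain n where n: "z < 2^n" using real_arch_pow[of 2 z] by auto
  have ex: "\<exists>k. z \<le> 2^(k+1) * (real r + 1)"
  proof
    have "(2::real)^n \<le> 2^(n+1) * (real r + 1)"
      using mult_mono[of "(2::real)^n" "2^(n+1)" 1 "real r + 1"] by simp
    then show "z \<le> 2^(n+1) * (real r + 1)" using n by linarith
  qed
  define k where "k = (LEAST k. z \<le> 2^(k+1) * (real r + 1))"
  have kup: "z \<le> 2^(k+1) * (real r + 1)" unfolding k_def using LeastI_ex[OF ex] .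
  have klow: "2^k * (real r + 1) < z"
  proof (cases k)
    case 0 then show ?thesis using False by simp
  next
    case (Suc k')
    have "\<not> z \<le> 2^(k'+1) * (real r + 1)" using Suc k_def not_less_Least by (metis lessI)
    then show ?thesis using Suc by simp
  qed
  define K :: real where "K = 2^k"
  have Kpos: "K > 0" unfolding K_def by simp
  define g where "g j = (if K * real (r+j) < z then 2*K else K)" for j
  have tg: "g j \<le> 2^(E j)" if j: "j \<in> {1..r+1}" for j
  proof -
    have z: "z \<le> 2^(E j) * real (r+j)" using H[OF j] .
    have "real (r+j) < 2 * (real r + 1)" using j by auto
    then have "2^k * (real r + 1) < 2^(E j) * (2 * (real r + 1))"
      using klow z by (smt (verit, best) mult_left_mono zero_le_power)
    then have "2^k * (real r + 1) < 2^(E j + 1) * (real r + 1)" by (simp add: algebra_simps)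
    then have "(2::real)^k < 2^(E j + 1)"
      using mult_less_cancel_right_pos[of "real r + 1" "2^k" "2^(E j+1)"] by simp
    then have "k < E j + 1" using pow2_ge by blast
    then have Kle: "K \<le> 2^(E j)" unfolding K_def by (simp add: power_increasing)
    show ?thesis
    proof (cases "K * real (r+j) < z")
      case True
      then have "K * real (r+j) < 2^(E j) * real (r+j)" using z by linarith
      then have "K < 2^(E j)" using j by (simp add: mult_less_cancel_right)
      then have "k < E j" unfolding K_def using pow2_ge by blast
      then have "2*K \<le> 2^(E j)" unfolding K_def
        by (metis Suc_leI power_Suc power_increasing one_le_numeral)
      then show ?thesis using True g_def by simp
    next
      case False then show ?thesis using Kle g_def by simp
    qed
  qed
  have sumge: "(\<Sum>j=1..r+1. g j) \<le> (\<Sum>j=1..r+1. (2::real)^(E j))"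
    by (intro sum_mono tg)
  have "z \<le> (\<Sum>j=1..r+1. g j)"
  proof (cases "K * real (2*r+1) < z")
    case True
    have "g j = 2*K" if "j \<in> {1..r+1}" for j
    proof -
      have "K * real (r+j) \<le> K * real (2*r+1)" using that Kpos by (intro mult_left_mono) auto
      then show ?thesis using True g_def by simp
    qed
    then have "(\<Sum>j=1..r+1. g j) = (\<Sum>j=1..r+1. 2*K)" by (intro sum.cong) auto
    also have "\<dots> = 2*K*(real r + 1)" by simp
    finally show ?thesis using kup K_def by (simp add: algebra_simps)
  next
    case False
    have rr: "r + (r+1) = 2*r+1" by simp
    have P1: "z \<le> K * real (r+(r+1))" using False unfolding rr by linarith
    then have ex2: "\<exists>j. z \<le> K * real (r+j)" by blast
    define t where "t = (LEAST j. z \<le> K * real (r+j))"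
    have tz: "z \<le> K * real (r+t)" unfolding t_def using LeastI_ex[OF ex2] .
    have tlt: "K * real (r+j) < z" if "j < t" for j
    proof -
      have "\<not> z \<le> K * real (r+j)" using not_less_Least[of j "\<lambda>j. z \<le> K * real (r+j)"] that t_def by blast
      then show ?thesis by linarith
    qed
    have "t \<le> r+1" unfolding t_def by (rule Least_le) (rule P1)
    have "t \<ge> 1"
    proof (rule ccontr)
      assume "\<not> t \<ge> 1" then have "t = 0" by simp
      then have "z \<le> K * real r" using tz by simp
      moreover have "K * real r < K * (real r + 1)" using Kpos by simp
      moreover have "K * (real r + 1) < z" using klow K_def by simp
      ultimately show False by linarith
    qed
    have "(\<Sum>j=1..r+1. g j) \<ge> (\<Sum>j=1..r+1. K + (if j < t then K else 0))"
      using Kpos tlt by (intro sum_mono) (auto simp: g_def)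
    moreover have "(\<Sum>j=1..r+1. K + (if j < t then K else 0)) = K * (real r + 1) + K * real (t - 1)"
    proof -
      have "(\<Sum>j=1..r+1. (if j < t then K else 0)) = (\<Sum>j\<in>{1..r+1} \<inter> {j. j < t}. K)"
        using sum.inter_restrict[of "{1..r+1}" "\<lambda>_. K" "{j. j < t}"] by simp
      also have "{1..r+1} \<inter> {j. j < t} = {1..<t}" using \<open>t \<le> r+1\<close> by auto
      finally have "(\<Sum>j=1..r+1. (if j < t then K else 0)) = K * real (t - 1)" by simp
      then show ?thesis by (simp add: sum.distrib)
    qed
    moreover have "K * (real r + 1) + K * real (t - 1) = K * real (r + t)"
      using \<open>t \<ge> 1\<close> by (simp add: algebra_simps of_nat_diff)
    ultimately show ?thesis using tz by linarith
  qed
  then show ?thesis using sumge by linarith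
qed



definition Dprop :: "nat \<Rightarrow> real set \<Rightarrow> bool" where
  "Dprop r U \<longleftrightarrow> (\<forall>a b. gap_interval U a b \<longrightarrow> (\<exists>j\<in>{1..r+1}. \<exists>e::nat.
     qpt r (j-1) \<le> a \<and> b \<le> qpt r j \<and> b - a = (qpt r j - qpt r (j-1)) / 2^e))"

definition Rprop :: "real set \<Rightarrow> bool" where
  "Rprop U \<longleftrightarrow> (\<forall>a b a' b'. gap_interval U a b \<longrightarrow> gap_interval U a' b' \<longrightarrow> b - a \<le> 2*(b' - a'))"

lemma Q01: assumes "r > 0" shows "Qset r \<union> {0,1} = qpt r ` {0..r+1}"
proof -
  have "{0..r+1} = insert 0 (insert (r+1) {1..r})" by auto
  then show ?thesis unfolding Qset_def using qpt_0 qpt_last[OF assms] by auto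
qed

lemma gapQ:
  assumes "r > 0" "gap_interval (Qset r) a b"
  shows "\<exists>i\<le>r. a = qpt r i \<and> b = qpt r (Suc i)"
proof -
  have "a \<in> qpt r ` {0..r+1}" "b \<in> qpt r ` {0..r+1}" using assms Q01[OF assms(1)]
    unfolding gap_interval_def by auto
  then obtain i i' where ii: "i \<le> r+1" "i' \<le> r+1" "a = qpt r i" "b = qpt r i'" by auto
  have "i < i'" using assms(2) ii qpt_mono_iff[OF assms(1)] unfolding gap_interval_def by simp
  have "i' = Suc i"
  proof (rule ccontr)
    assume "i' \<noteq> Suc i"
    then have "Suc i < i'" using \<open>i < i'\<close> by simp
    then have "Suc i \<in> {1..r}" using ii by simp
    then have "qpt r (Suc i) \<in> Qset r" unfolding Qset_def by blast
    moreover have "a < qpt r (Suc i)" "qpt r (Suc i) < b"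
      using ii \<open>Suc i < i'\<close> qpt_mono_iff[OF assms(1)] by auto
    ultimately show False using assms(2) unfolding gap_interval_def by blast
  qed
  then show ?thesis using ii \<open>i < i'\<close> by auto
qed

lemma InvQ: assumes "r > 0" shows "Dprop r (Qset r) \<and> Rprop (Qset r)"
proof
  show "Dprop r (Qset r)" unfolding Dprop_def
  proof (intro allI impI)
    fix a b assume "gap_interval (Qset r) a b"
    then obtain i where i: "i \<le> r" "a = qpt r i" "b = qpt r (Suc i)" using gapQ[OF assms] by blast
    show "\<exists>j\<in>{1..r+1}. \<exists>e::nat. qpt r (j-1) \<le> a \<and> b \<le> qpt r j \<and> b - a = (qpt r j - qpt r (j-1)) / 2^e"
      by (rule bexI[of _ "Suc i"], rule exI[of _ 0]) (use i in auto)
  qed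
  have sp: "sigma_r r > 0" using sigma_pos[OF assms] .
  show "Rprop (Qset r)" unfolding Rprop_def
  proof (intro allI impI)
    fix a b a' b' assume g1: "gap_interval (Qset r) a b" and g2: "gap_interval (Qset r) a' b'"
    obtain i where i: "i \<le> r" "a = qpt r i" "b = qpt r (Suc i)" using gapQ[OF assms g1] by blast
    obtain i' where i': "i' \<le> r" "a' = qpt r i'" "b' = qpt r (Suc i')" using gapQ[OF assms g2] by blast
    have l1: "b - a = 1 / (real (r + Suc i) * sigma_r r)" using seg_len[of "Suc i" r] i by simp
    have l2: "b' - a' = 1 / (real (r + Suc i') * sigma_r r)" using seg_len[of "Suc i'" r] i' by simp
    have "1 / (real (r + Suc i) * sigma_r r) \<le> 1 / (real (r + 1) * sigma_r r)"
      using sp by (intro divide_left_mono mult_right_mono mult_pos_pos) auto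
    also have "\<dots> \<le> 2 / (real (r + Suc i') * sigma_r r)"
    proof -
      have "real (r + Suc i') \<le> 2 * real (r+1)" using i' by simp
      then have "2 / (2 * real (r+1) * sigma_r r) \<le> 2 / (real (r + Suc i') * sigma_r r)"
        using sp by (intro divide_left_mono mult_right_mono mult_pos_pos) auto
      moreover have "2 / (2 * real (r+1) * sigma_r r) = 1 / (real (r + 1) * sigma_r r)"
      proof -
        have h: "\<And>X::real. 2 / (2 * X) = 1 / X" by simp
        show ?thesis using h[of "real (r+1) * sigma_r r"] by (simp only: mult.assoc)
      qed
      ultimately show ?thesis by simp
    qed
    finally show "b - a \<le> 2 * (b' - a')" using l1 l2 by simp
  qed
qed



lemma gap_bounds:
  assumes "U \<subseteq> {0<..<1}" "gap_interval U a b"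
  shows "0 \<le> a \<and> b \<le> 1 \<and> a < b"
proof -
  have "a \<in> U \<union> {0,1}" "b \<in> U \<union> {0,1}" "a < b" using assms(2) unfolding gap_interval_def by auto
  then show ?thesis using assms(1) by auto
qed

lemma gap_ins:
  assumes U01: "U \<subseteq> {0<..<1}" and g0: "gap_interval U a0 b0" and x: "x = (a0+b0)/2"
    and g: "gap_interval (insert x U) a b"
  shows "gap_interval U a b \<or> (a = a0 \<and> b = x) \<or> (a = x \<and> b = b0)"
proof -
  have b0: "0 \<le> a0" "b0 \<le> 1" "a0 < b0" using gap_bounds[OF U01 g0] by auto
  have xa: "a0 < x" "x < b0" using x b0 by auto
  have a0in: "a0 \<in> U \<union> {0,1}" and b0in: "b0 \<in> U \<union> {0,1}"
    and nog0: "\<forall>u\<in>U. \<not> (a0 < u \<and> u < b0)" using g0 unfolding gap_interval_def by auto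
  have ab: "a < b" and ain: "a \<in> insert x U \<union> {0,1}" and bin: "b \<in> insert x U \<union> {0,1}"
    and nog: "\<forall>u\<in>insert x U. \<not> (a < u \<and> u < b)" using g unfolding gap_interval_def by auto
  have ins01: "insert x U \<subseteq> {0<..<1}" using U01 xa b0 by auto
  have a01: "0 \<le> a" "a \<le> 1" using ain ins01 by auto
  have b01: "0 \<le> b" "b \<le> 1" using bin ins01 by auto
  show ?thesis
  proof (cases "a = x")
    case True
    have "b = b0"
    proof (rule ccontr)
      assume "b \<noteq> b0"
      then consider "b0 < b" | "b < b0" by linarith
      then show False
      proof cases
        case 1
        then have "b0 \<noteq> 0" "b0 \<noteq> 1" using xa b0 b01 by auto
        then have "b0 \<in> U" using b0in by auto
        then show False using nog True xa 1 by auto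
      next
        case 2
        have "b \<noteq> x" using ab True by simp
        moreover have "b \<noteq> 0" "b \<noteq> 1" using ab True xa b0 2 by auto
        ultimately have "b \<in> U" using bin by auto
        then show False using nog0 xa ab True 2 by auto
      qed
    qed
    then show ?thesis using True by simp
  next
    case aF: False
    show ?thesis
    proof (cases "b = x")
      case True
      have "a = a0"
      proof (rule ccontr)
        assume "a \<noteq> a0"
        then consider "a < a0" | "a0 < a" by linarith
        then show False
        proof cases
          case 1
          then have "a0 \<noteq> 0" "a0 \<noteq> 1" using xa b0 a01 by auto
          then have "a0 \<in> U" using a0in by auto
          then show False using nog True xa 1 by auto
        next
          case 2
          have "a \<noteq> 0" "a \<noteq> 1" using ab True xa b0 2 by auto
          then have "a \<in> U" using ain aF by auto
          then show False using nog0 xa ab True 2 by auto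
        qed
      qed
      then show ?thesis using True by simp
    next
      case False
      have "a \<in> U \<union> {0,1}" "b \<in> U \<union> {0,1}" using ain bin aF False by auto
      moreover have "\<forall>u\<in>U. \<not> (a < u \<and> u < b)" using nog by auto
      ultimately have "gap_interval U a b" unfolding gap_interval_def using ab by blast
      then show ?thesis by simp
    qed
  qed
qed

lemma step_inv:
  assumes r: "r > 0" and U01: "U \<subseteq> {0<..<1}" and D: "Dprop r U" and R: "Rprop U"
    and lg: "largest_gap U a0 b0" and x: "x = (a0+b0)/2"
  shows "Dprop r (insert x U) \<and> Rprop (insert x U) \<and> x \<in> {0<..<1} \<and> x \<notin> U"
proof -
  have g0: "gap_interval U a0 b0" and big: "\<And>a b. gap_interval U a b \<Longrightarrow> b - a \<le> b0 - a0"
    using lg unfolding largest_gap_def by auto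
  have b0: "0 \<le> a0" "b0 \<le> 1" "a0 < b0" using gap_bounds[OF U01 g0] by auto
  have xa: "a0 < x" "x < b0" using x b0 by auto
  have xU: "x \<notin> U" using g0 xa unfolding gap_interval_def by auto
  have x01: "x \<in> {0<..<1}" using xa b0 by auto
  have lenc: "gap_interval U a b \<or> b - a = (b0 - a0)/2" if "gap_interval (insert x U) a b" for a b
    using gap_ins[OF U01 g0 x that] x by (auto simp: field_simps)
  have Rn: "Rprop (insert x U)" unfolding Rprop_def
  proof (intro allI impI)
    fix a b a' b' assume g1: "gap_interval (insert x U) a b" and g2: "gap_interval (insert x U) a' b'"
    have p1: "b' - a' > 0" using g2 unfolding gap_interval_def by simp
    consider "gap_interval U a b" | "b - a = (b0 - a0)/2" using lenc[OF g1] by blast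
    then show "b - a \<le> 2 * (b' - a')"
    proof cases
      case 1
      consider "gap_interval U a' b'" | "b' - a' = (b0 - a0)/2" using lenc[OF g2] by blast
      then show ?thesis
      proof cases
        case 3: 1 then show ?thesis using R 1 unfolding Rprop_def by blast
      next
        case 2 then show ?thesis using big[OF 1] by simp
      qed
    next
      case 2
      consider "gap_interval U a' b'" | "b' - a' = (b0 - a0)/2" using lenc[OF g2] by blast
      then show ?thesis
      proof cases
        case 1 then have "b0 - a0 \<le> 2 * (b' - a')" using R g0 unfolding Rprop_def by blast
          then show ?thesis using 2 b0 by simp
      next
        case 3: 2 then show ?thesis using 2 b0 by simp
      qed
    qed
  qed
  have Dn: "Dprop r (insert x U)" unfolding Dprop_def
  proof (intro allI impI)
    fix a b assume g: "gap_interval (insert x U) a b"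
    obtain j e where j: "j \<in> {1..r+1}" "qpt r (j-1) \<le> a0" "b0 \<le> qpt r j"
      "b0 - a0 = (qpt r j - qpt r (j-1)) / 2^e" using D g0 unfolding Dprop_def by blast
    have half: "(b0 - a0)/2 = (qpt r j - qpt r (j-1)) / 2^(Suc e)" using j(4) by simp
    consider "gap_interval U a b" | "a = a0 \<and> b = x" | "a = x \<and> b = b0"
      using gap_ins[OF U01 g0 x g] by blast
    then show "\<exists>j\<in>{1..r+1}. \<exists>e::nat. qpt r (j-1) \<le> a \<and> b \<le> qpt r j \<and> b - a = (qpt r j - qpt r (j-1)) / 2^e"
    proof cases
      case 1 then show ?thesis using D unfolding Dprop_def by blast
    next
      case 2
      have "b - a = (b0 - a0)/2" using 2 x by auto
      then have "b - a = (qpt r j - qpt r (j-1)) / 2^(Suc e)" using half by simp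
      moreover have "qpt r (j-1) \<le> a" "b \<le> qpt r j" using 2 j xa by auto
      ultimately show ?thesis using j(1) by blast
    next
      case 3
      have "b - a = (b0 - a0)/2" using 3 x by auto
      then have "b - a = (qpt r j - qpt r (j-1)) / 2^(Suc e)" using half by simp
      moreover have "qpt r (j-1) \<le> a" "b \<le> qpt r j" using 3 j xa by auto
      ultimately show ?thesis using j(1) by blast
    qed
  qed
  show ?thesis using Dn Rn x01 xU by blast
qed



lemma Q_sub01: assumes "r > 0" "i \<le> r+1" shows "qpt r i \<in> Qset r \<union> {0,1}"
  using Q01[OF assms(1)] assms(2) by auto

lemma card_split:
  assumes r: "r > 0" and fin: "finite U" and QU: "Qset r \<subseteq> U" and U01: "U \<subseteq> {0<..<1}"
  shows "real (card U) + 1 = (\<Sum>j=1..r+1. real (card ((U \<union> {0,1}) \<inter> {qpt r (j-1)..qpt r j})) - 1)"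
proof -
  define S where "S = U \<union> {0,1}"
  define T where "T j = S \<inter> {qpt r (j-1)..qpt r j}" for j
  define W where "W i = S \<inter> {0..qpt r i}" for i
  have finS: "finite S" using fin S_def by simp
  have qS: "qpt r i \<in> S" if "i \<le> r+1" for i using Q_sub01[OF r that] QU S_def by auto
  have qnn: "0 \<le> qpt r i" for i using qpt_le_iff[OF r, of 0 i] qpt_0 by simp
  have main: "real (card (W i)) = 1 + (\<Sum>j=1..i. real (card (T j)) - 1)" if "i \<le> r+1" for i
    using that
  proof (induction i)
    case 0
    have "W 0 = {0}" unfolding W_def S_def using U01 qpt_0 by auto
    then show ?case by simp
  next
    case (Suc i)
    have un: "W (Suc i) = W i \<union> T (Suc i)"
    proof -
      have "qpt r i \<le> qpt r (Suc i)" using qpt_le_iff[OF r] by simp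
      then have "{0..qpt r (Suc i)} = {0..qpt r i} \<union> {qpt r i..qpt r (Suc i)}" using qnn[of i] by auto
      then show ?thesis unfolding W_def T_def by auto
    qed
    have le: "qpt r i \<le> qpt r (Suc i)" using qpt_le_iff[OF r] by simp
    have int: "W i \<inter> T (Suc i) = {qpt r i}" unfolding W_def T_def using qS[of i] Suc.prems qnn[of i] le by auto
    have "card (W i) + card (T (Suc i)) = card (W (Suc i)) + card (W i \<inter> T (Suc i))"
      using card_Un_Int[of "W i" "T (Suc i)"] un finS unfolding W_def T_def by simp
    then have "real (card (W (Suc i))) = real (card (W i)) + real (card (T (Suc i))) - 1"
      using int by simp
    then show ?case using Suc by simp
  qed
  have "W (r+1) = S" unfolding W_def S_def using qpt_last[OF r] U01 by auto
  moreover have "card S = card U + 2"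
  proof -
    have "0 \<notin> U" "1 \<notin> U" using U01 by auto
    then have "0 \<notin> insert 1 U" by simp
    then show ?thesis unfolding S_def using fin \<open>1 \<notin> U\<close> by simp
  qed
  ultimately have "real (card U) + 2 = 1 + (\<Sum>j=1..r+1. real (card (T j)) - 1)" using main[of "r+1"] by simp
  then show ?thesis unfolding T_def S_def by simp
qed


lemma mingap:
  assumes r: "r > 0" and fin: "finite U" and QU: "Qset r \<subseteq> U" and U01: "U \<subseteq> {0<..<1}"
    and D: "Dprop r U" and R: "Rprop U" and g: "gap_interval U a b"
  shows "1 / (2 * sigma_r r * (real (card U) + 1)) \<le> b - a"
proof -
  define \<sigma> where "\<sigma> = sigma_r r"
  have sp: "\<sigma> > 0" using sigma_pos[OF r] \<sigma>_def by simp
  define l where "l = b - a"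
  have lp: "l > 0" using g unfolding gap_interval_def l_def by simp
  define z where "z = 1 / (2 * \<sigma> * l)"
  define S where "S = U \<union> {0,1}"
  define T where "T j = S \<inter> {qpt r (j-1)..qpt r j}" for j
  define len where "len j = qpt r j - qpt r (j-1)" for j
  have finS: "finite S" using fin S_def by simp
  have qS: "qpt r i \<in> S" if "i \<le> r+1" for i using Q_sub01[OF r that] QU S_def by auto
  have perj: "\<exists>E. 2^E \<le> real (card (T j)) - 1 \<and> z \<le> 2^E * real (r+j)" if j: "j \<in> {1..r+1}" for j
  proof -
    define A where "A = qpt r (j-1)"
    define B where "B = qpt r j"
    have AB: "A < B" unfolding A_def B_def using qpt_mono_iff[OF r] j by auto
    have lenj: "len j = 1 / (real (r + j) * \<sigma>)" unfolding len_def \<sigma>_def using seg_len[of j r] j by simp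
    have lenp: "len j > 0" unfolding lenj using sp j by simp
    have AT: "A \<in> T j" and BT: "B \<in> T j" unfolding T_def A_def B_def using qS j AB A_def B_def by auto
    have finT: "finite (T j)" unfolding T_def using finS by simp
    have Tsub: "T j \<subseteq> {A..B}" unfolding T_def A_def B_def by auto
    have cg_gap: "gap_interval U a' b'" if "cgap (T j) a' b'" for a' b'
    proof -
      have h: "a' < b'" "a' \<in> T j" "b' \<in> T j" "\<forall>u\<in>T j. \<not> (a' < u \<and> u < b')"
        using that unfolding cgap_def by auto
      have "a' \<in> U \<union> {0,1}" "b' \<in> U \<union> {0,1}" using h T_def S_def by auto
      moreover have "\<forall>u\<in>U. \<not> (a' < u \<and> u < b')"
      proof (intro ballI notI)
        fix u assume "u \<in> U" "a' < u \<and> u < b'"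
        moreover have "A \<le> a'" "b' \<le> B" using h Tsub by auto
        ultimately have "u \<in> T j" unfolding T_def S_def A_def B_def by auto
        then show False using h \<open>a' < u \<and> u < b'\<close> by blast
      qed
      ultimately show ?thesis unfolding gap_interval_def using h by blast
    qed
    have cg_len: "\<exists>e::nat. b' - a' = len j / 2^e" if cg: "cgap (T j) a' b'" for a' b'
    proof -
      obtain j' e where j': "j' \<in> {1..r+1}" "qpt r (j'-1) \<le> a'" "b' \<le> qpt r j'"
        "b' - a' = (qpt r j' - qpt r (j'-1)) / 2^e" using D cg_gap[OF cg] unfolding Dprop_def by blast
      have h: "a' < b'" "a' \<in> T j" "b' \<in> T j" using cg unfolding cgap_def by auto
      have "A \<le> a'" "b' \<le> B" using h Tsub by auto
      then have "qpt r (j-1) < qpt r j'" "qpt r (j'-1) < qpt r j" using j' h A_def B_def by auto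
      then have "j - 1 < j'" "j' - 1 < j" using qpt_mono_iff[OF r] by auto
      then have "j' = j" using j j' by auto
      then show ?thesis using j' len_def by auto
    qed
    define G where "G = {e::nat. \<exists>a' b'. cgap (T j) a' b' \<and> b' - a' = len j / 2^e}"
    obtain b1 where b1: "cgap (T j) A b1" using gap_exists[OF finT AT BT AB] by blast
    obtain e1 where "b1 - A = len j / 2^e1" using cg_len[OF b1] by blast
    then have "e1 \<in> G" unfolding G_def using b1 by blast
    define E where "E = (LEAST e. e \<in> G)"
    have "E \<in> G" unfolding E_def using \<open>e1 \<in> G\<close> by (rule LeastI)
    then obtain a2 b2 where ab2: "cgap (T j) a2 b2" "b2 - a2 = len j / 2^E" unfolding G_def by blast
    have allle: "b' - a' \<le> len j / 2^E" if cgx: "cgap (T j) a' b'" for a' b'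
    proof -
      obtain e where e: "b' - a' = len j / 2^e" using cg_len[OF cgx] by blast
      then have "e \<in> G" unfolding G_def using cgx by blast
      then have "E \<le> e" unfolding E_def by (rule Least_le)
      then have "(2::real)^E \<le> 2^e" by (simp add: power_increasing)
      then have "len j / 2^e \<le> len j / 2^E" using lenp by (intro divide_left_mono) auto
      then show ?thesis using e by simp
    qed
    have "B - A \<le> (real (card (T j)) - 1) * (len j / 2^E)"
      using gap_count[OF finT AT BT AB Tsub allle] by blast
    moreover have "B - A = len j" unfolding A_def B_def len_def by simp
    ultimately have "len j \<le> (real (card (T j)) - 1) * len j / 2^E" by simp
    then have "len j * 2^E \<le> (real (card (T j)) - 1) * len j" by (simp add: le_divide_eq)
    then have "2^E * len j \<le> (real (card (T j)) - 1) * len j" by (simp add: mult.commute)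
    then have c1: "2^E \<le> real (card (T j)) - 1" using lenp mult_le_cancel_right_pos by blast
    have "len j / 2^E \<le> 2 * l" using R cg_gap[OF ab2(1)] g ab2(2) unfolding Rprop_def l_def by metis
    moreover have "len j / 2^E = 1 / (real (r + j) * \<sigma> * 2^E)" unfolding lenj by simp
    ultimately have "1 / (real (r + j) * \<sigma> * 2^E) \<le> 2 * l" by simp
    moreover have Xp: "real (r + j) * \<sigma> * 2^E > 0" using sp j by simp
    ultimately have "1 \<le> 2 * l * (real (r + j) * \<sigma> * 2^E)" by (simp add: divide_le_eq)
    then have "1 \<le> 2^E * real (r+j) * (2 * \<sigma> * l)" by (simp add: mult_ac)
    then have c2: "z \<le> 2^E * real (r+j)" unfolding z_def using sp lp by (simp add: divide_le_eq)
    show ?thesis using c1 c2 by blast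
  qed
  then obtain E where E: "\<And>j. j \<in> {1..r+1} \<Longrightarrow> 2^(E j) \<le> real (card (T j)) - 1 \<and> z \<le> 2^(E j) * real (r+j)"
    by metis
  have "z \<le> (\<Sum>j=1..r+1. (2::real)^(E j))" using pow_sum[of r z E] E by blast
  also have "\<dots> \<le> (\<Sum>j=1..r+1. real (card (T j)) - 1)" using E by (intro sum_mono) blast
  also have "\<dots> = real (card U) + 1" using card_split[OF r fin QU U01] unfolding T_def S_def by simp
  finally have "z \<le> real (card U) + 1" .
  then have "1 \<le> (real (card U) + 1) * (2 * \<sigma> * l)" unfolding z_def using sp lp
    by (simp add: divide_le_eq)
  then have "1 / (2 * \<sigma> * (real (card U) + 1)) \<le> l" using sp
    by (simp add: divide_le_eq mult_ac)
  then show ?thesis unfolding l_def \<sigma>_def .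
qed



definition SepP :: "real \<Rightarrow> real set \<Rightarrow> bool" where
  "SepP \<delta> U \<longleftrightarrow> (\<forall>x\<in>U \<union> {0,1}. \<forall>y\<in>U \<union> {0,1}. x < y \<longrightarrow> \<delta> \<le> y - x)"

lemma sep_from_gaps:
  assumes fin: "finite U" and gaps: "\<And>a b. gap_interval U a b \<Longrightarrow> \<delta> \<le> b - a"
  shows "SepP \<delta> U"
  unfolding SepP_def
proof (intro ballI impI)
  fix x y assume xy: "x \<in> U \<union> {0,1}" "y \<in> U \<union> {0,1}" "x < y"
  have fin': "finite (U \<union> {0,1})" using fin by simp
  obtain b' where b': "cgap (U \<union> {0,1}) x b'" "b' \<le> y" using gap_exists[OF fin' xy(1) xy(2) xy(3)] by blast
  then have "gap_interval U x b'" unfolding cgap_def gap_interval_def by blast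
  then have "\<delta> \<le> b' - x" using gaps by blast
  then show "\<delta> \<le> y - x" using b' by linarith
qed

lemma SepP_mono: "SepP \<delta> W \<Longrightarrow> U \<subseteq> W \<Longrightarrow> SepP \<delta> U"
  unfolding SepP_def by blast

lemma pack:
  fixes V :: "real set"
  assumes "finite V" "V \<noteq> {}" "\<forall>v\<in>V. h \<le> v" "\<forall>v\<in>V. \<forall>w\<in>V. v \<noteq> w \<longrightarrow> h \<le> \<bar>v - w\<bar>"
  shows "real (card V) * h \<le> Max V"
  using assms
proof (induction "card V" arbitrary: V rule: less_induct)
  case less
  define M where "M = Max V"
  have MV: "M \<in> V" unfolding M_def by (rule Max_in[OF less.prems(1,2)])
  show ?case
  proof (cases "V - {M} = {}")
    case True
    then have "V = {M}" using MV by blast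
    then have "card V = 1" by simp
    moreover have "h \<le> M" using less.prems(3) MV by blast
    ultimately show ?thesis using M_def by simp
  next
    case False
    let ?V = "V - {M}"
    have fin: "finite ?V" using less.prems(1) by simp
    have c: "card V = card ?V + 1" using card_Suc_Diff1[OF less.prems(1) MV] by simp
    have IH: "real (card ?V) * h \<le> Max ?V"
    proof (rule less.hyps)
      show "card ?V < card V" using c by simp
      show "finite ?V" by (rule fin)
      show "?V \<noteq> {}" by (rule False)
      show "\<forall>v\<in>?V. h \<le> v" using less.prems(3) by blast
      show "\<forall>v\<in>?V. \<forall>w\<in>?V. v \<noteq> w \<longrightarrow> h \<le> \<bar>v - w\<bar>" using less.prems(4) by blast
    qed
    have M'V: "Max ?V \<in> ?V" by (rule Max_in[OF fin False])
    have "Max ?V \<le> M" using M'V M_def less.prems(1) by simp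
    moreover have "Max ?V \<noteq> M" using M'V by blast
    moreover have "Max ?V \<in> V" using M'V by blast
    ultimately have "h \<le> \<bar>M - Max ?V\<bar>" using bspec[OF bspec[OF less.prems(4) MV] \<open>Max ?V \<in> V\<close>] by auto
    then have "h \<le> M - Max ?V" using \<open>Max ?V \<le> M\<close> by simp
    then show ?thesis using IH c M_def by (simp add: algebra_simps)
  qed
qed



lemma Q_in01: assumes "r > 0" shows "Qset r \<subseteq> {0<..<1}"
proof
  fix x assume "x \<in> Qset r"
  then obtain i where i: "i \<in> {1..r}" "x = qpt r i" unfolding Qset_def by auto
  have "qpt r 0 < qpt r i" "qpt r i < qpt r (r+1)" using qpt_mono_iff[OF assms] i by auto
  then show "x \<in> {0<..<1}" using qpt_0 qpt_last[OF assms] i by auto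
qed

lemma card_Q: "card (Qset r) \<le> r"
  unfolding Qset_def using card_image_le[of "{1..r}" "qpt r"] by simp

lemma finite_Q: "finite (Qset r)"
  unfolding Qset_def by simp

theorem lemma1:
  fixes r n :: nat and tau :: "real list" and s d X :: "nat \<Rightarrow> real"
  assumes "r > 0"
    and "distinct tau" and "set tau = Qset r"
    and "is_instance n s d"
    and "maxload n s d > r"
    and "alg_run r tau n s d X"
  shows "OPT_A n s d \<le> ereal (2 * sigma_r r) * objective n s d X"
proof -
  have r: "r > 0" by fact
  define \<sigma> where "\<sigma> = sigma_r r"
  have sp: "\<sigma> > 0" unfolding \<sigma>_def using sigma_pos[OF r] .
  define m where "m = maxload n s d"
  have mr: "r < m" using assms(5) m_def by simp
  define \<delta> where "\<delta> = 1 / (2 * \<sigma> * (real m + 1))"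
  have n1: "n \<ge> 1" and s0: "s 0 = 0" and smono: "\<And>i j. i \<le> j \<Longrightarrow> j < n \<Longrightarrow> s i \<le> s j"
    and sd: "\<And>i. i < n \<Longrightarrow> s i < d i" using assms(4) unfolding is_instance_def by auto
  have hor: "d k \<le> horizon n d" if "k < n" for k
    unfolding horizon_def using that by (intro Max_ge) auto
  define MS where "MS = {card (present n s d t) | t. t \<le> horizon n d}"
  have pres_sub: "present n s d t \<subseteq> {..<n}" for t unfolding present_def by auto
  have MSfin: "finite MS"
  proof (rule finite_subset)
    show "MS \<subseteq> {..n}" unfolding MS_def using pres_sub card_mono[of "{..<n}"] by fastforce
  qed simp
  have MSne: "MS \<noteq> {}" unfolding MS_def by blast
  have mMS: "m = Max MS" unfolding m_def maxload_def MS_def by simp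
  have load_le: "card (present n s d t) \<le> m" if "t \<le> horizon n d" for t
    unfolding mMS using MSfin that MS_def by (intro Max_ge) auto
  have "m \<in> MS" unfolding mMS by (rule Max_in[OF MSfin MSne])
  then obtain t0 where t0: "t0 \<le> horizon n d" "card (present n s d t0) = m"
    unfolding MS_def by auto
  define U where "U k = X ` {..<k}" for k
  have alg: "(if U k - X ` {i. i < k \<and> s k \<le> d i} \<noteq> {} then X k \<in> U k - X ` {i. i < k \<and> s k \<le> d i}
         else if \<not> Qset r \<subseteq> U k then X k = hd (filter (\<lambda>q. q \<notin> U k) tau)
         else (\<exists>a b. largest_gap (U k) a b \<and> X k = (a + b) / 2))" if "k < n" for k
    using assms(6) that unfolding alg_run_def Let_def U_def by blast
  have USuc: "U (Suc k) = insert (X k) (U k)" for k unfolding U_def by (simp add: lessThan_Suc)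
  have Q01: "Qset r \<subseteq> {0<..<1}" using Q_in01[OF r] .
  have hdQ: "hd (filter (\<lambda>q. q \<notin> W) tau) \<in> Qset r - W" if nsub: "\<not> Qset r \<subseteq> W" for W
  proof -
    obtain q where "q \<in> Qset r" "q \<notin> W" using nsub by blast
    then have "q \<in> set (filter (\<lambda>q. q \<notin> W) tau)" using assms(3) by simp
    then have "filter (\<lambda>q. q \<notin> W) tau \<noteq> []" by (metis empty_iff empty_set)
    then have "hd (filter (\<lambda>q. q \<notin> W) tau) \<in> set (filter (\<lambda>q. q \<notin> W) tau)" by (rule hd_in_set)
    then show ?thesis using assms(3) by simp
  qed
  have inv: "U k \<subseteq> {0<..<1} \<and> card (U k) \<le> m \<and>
      (U k \<subseteq> Qset r \<or> (Qset r \<subseteq> U k \<and> Dprop r (U k) \<and> Rprop (U k)))" if "k \<le> n" for k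
    using that
  proof (induction k)
    case 0 then show ?case unfolding U_def by simp
  next
    case (Suc k)
    have k: "k < n" using Suc.prems by simp
    have IH: "U k \<subseteq> {0<..<1}" "card (U k) \<le> m"
      "U k \<subseteq> Qset r \<or> (Qset r \<subseteq> U k \<and> Dprop r (U k) \<and> Rprop (U k))" using Suc k by auto
    define Occ where "Occ = X ` {i. i < k \<and> s k \<le> d i}"
    have A: "(if U k - Occ \<noteq> {} then X k \<in> U k - Occ
         else if \<not> Qset r \<subseteq> U k then X k = hd (filter (\<lambda>q. q \<notin> U k) tau)
         else (\<exists>a b. largest_gap (U k) a b \<and> X k = (a + b) / 2))" unfolding Occ_def by (rule alg[OF k])
    show ?case
    proof (cases "U k - Occ \<noteq> {}")
      case True
      then have "X k \<in> U k" using A by auto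
      then have "U (Suc k) = U k" using USuc by auto
      then show ?thesis using IH by simp
    next
      case False
      then have UO: "U k \<subseteq> Occ" by blast
      have cardle: "card (U (Suc k)) \<le> m"
      proof -
        define I where "I = {i. i < k \<and> s k \<le> d i}"
        have finI: "finite I" unfolding I_def by simp
        have kI: "k \<notin> I" unfolding I_def by simp
        have "card (U k) \<le> card Occ" using UO unfolding Occ_def by (intro card_mono) auto
        also have "card Occ \<le> card I" unfolding Occ_def I_def by (rule card_image_le) simp
        finally have c1: "card (U k) \<le> card I" .
        have "card (U (Suc k)) \<le> Suc (card (U k))" unfolding USuc by (simp add: card_insert_le_m1)
        also have "\<dots> \<le> Suc (card I)" using c1 by simp
        also have "\<dots> = card (insert k I)" using finI kI by simp
        also have "\<dots> \<le> card (present n s d (s k))"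
        proof (rule card_mono)
          show "finite (present n s d (s k))" unfolding present_def by simp
          show "insert k I \<subseteq> present n s d (s k)"
            unfolding present_def I_def using k smono sd[OF k] by auto
        qed
        also have "\<dots> \<le> m" using load_le hor[OF k] sd[OF k] by simp
        finally show ?thesis by simp
      qed
      show ?thesis
      proof (cases "Qset r \<subseteq> U k")
        case False
        have "X k = hd (filter (\<lambda>q. q \<notin> U k) tau)" using A \<open>\<not> (U k - Occ \<noteq> {})\<close> False by simp
        then have "X k \<in> Qset r" using hdQ[OF False] by simp
        moreover have "U k \<subseteq> Qset r" using IH(3) False by blast
        ultimately have "U (Suc k) \<subseteq> Qset r" using USuc by simp
        then show ?thesis using cardle Q01 by blast
      next
        case True
        obtain a b where ab: "largest_gap (U k) a b" "X k = (a + b) / 2"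
          using A \<open>\<not> (U k - Occ \<noteq> {})\<close> True by auto
        have DR: "Dprop r (U k) \<and> Rprop (U k)"
        proof (cases "U k \<subseteq> Qset r")
          case True
          then have "U k = Qset r" using \<open>Qset r \<subseteq> U k\<close> by blast
          then show ?thesis using InvQ[OF r] by simp
        next
          case False then show ?thesis using IH(3) by blast
        qed
        have st: "Dprop r (insert (X k) (U k)) \<and> Rprop (insert (X k) (U k)) \<and> X k \<in> {0<..<1}"
          using step_inv[OF r IH(1) _ _ ab(1) ab(2)] DR by blast
        then show ?thesis using USuc cardle IH(1) True by auto
      qed
    qed
  qed
  have Un: "U n \<subseteq> {0<..<1}" "card (U n) \<le> m"
    "U n \<subseteq> Qset r \<or> (Qset r \<subseteq> U n \<and> Dprop r (U n) \<and> Rprop (U n))" using inv[of n] by auto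
  have finU: "finite (U n)" unfolding U_def by simp
  have dl: "\<delta> \<le> 1 / (2 * \<sigma> * (real N + 1))" if "N \<le> m" for N
    unfolding \<delta>_def using sp that by (intro divide_left_mono mult_left_mono mult_pos_pos) auto
  have SepU: "SepP \<delta> (U n)"
  proof (cases "U n \<subseteq> Qset r")
    case True
    have "SepP \<delta> (Qset r)"
    proof (rule sep_from_gaps[OF finite_Q])
      fix a b assume g: "gap_interval (Qset r) a b"
      have "1 / (2 * sigma_r r * (real (card (Qset r)) + 1)) \<le> b - a"
        using mingap[OF r finite_Q _ Q01 _ _ g] InvQ[OF r] by blast
      moreover have "card (Qset r) \<le> m" using card_Q[of r] mr by simp
      ultimately show "\<delta> \<le> b - a" using dl \<sigma>_def by fastforce
    qed
    then show ?thesis using SepP_mono True by blast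
  next
    case False
    then have I: "Qset r \<subseteq> U n" "Dprop r (U n)" "Rprop (U n)" using Un(3) by auto
    show ?thesis
    proof (rule sep_from_gaps[OF finU])
      fix a b assume g: "gap_interval (U n) a b"
      have "1 / (2 * sigma_r r * (real (card (U n)) + 1)) \<le> b - a"
        using mingap[OF r finU I(1) Un(1) I(2) I(3) g] .
      then show "\<delta> \<le> b - a" using dl[OF Un(2)] \<sigma>_def by fastforce
    qed
  qed
  have XU: "X i \<in> U n" if "i < n" for i unfolding U_def using that by simp
  have dist_lt: "X i \<noteq> X j" if ij: "i < j" "j < n" "s j \<le> d i" for i j
  proof -
    define Occ where "Occ = X ` {i. i < j \<and> s j \<le> d i}"
    have A: "(if U j - Occ \<noteq> {} then X j \<in> U j - Occ
         else if \<not> Qset r \<subseteq> U j then X j = hd (filter (\<lambda>q. q \<notin> U j) tau)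
         else (\<exists>a b. largest_gap (U j) a b \<and> X j = (a + b) / 2))" unfolding Occ_def by (rule alg[OF ij(2)])
    have iO: "X i \<in> Occ" unfolding Occ_def using ij by blast
    have iU: "X i \<in> U j" unfolding U_def using ij by blast
    show ?thesis
    proof (cases "U j - Occ \<noteq> {}")
      case True then show ?thesis using A iO by auto
    next
      case F: False
      show ?thesis
      proof (cases "Qset r \<subseteq> U j")
        case False
        then have XjU: "X j \<notin> U j" using A F hdQ[OF False] by simp
        show ?thesis
        proof
          assume "X i = X j" then show False using XjU iU by simp
        qed
      next
        case True
        obtain a b where ab: "gap_interval (U j) a b" "X j = (a + b) / 2"
          using A F True unfolding largest_gap_def by auto
        then have "a < X j" "X j < b" unfolding gap_interval_def by auto
        then have XjU: "X j \<notin> U j" using ab(1) unfolding gap_interval_def by auto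
        show ?thesis
        proof
          assume "X i = X j" then show False using XjU iU by simp
        qed
      qed
    qed
  qed
  have dist: "X i \<noteq> X j" if "i \<in> present n s d t" "j \<in> present n s d t" "i \<noteq> j" for i j t
  proof (cases "i < j")
    case True then show ?thesis using dist_lt[of i j] that unfolding present_def by auto
  next
    case False then have "j < i" using that by simp
    then show ?thesis using dist_lt[of j i] that unfolding present_def by auto
  qed
  have dmin_ge: "ereal \<delta> \<le> dmin n s d t X" for t
    unfolding dmin_def
  proof (rule Inf_greatest)
    fix y assume "y \<in> ereal ` ({min \<bar>X i - 0\<bar> \<bar>X i - 1\<bar> | i. i \<in> present n s d t} \<union>
      {\<bar>X i - X j\<bar> | i j. i \<in> present n s d t \<and> j \<in> present n s d t \<and> i \<noteq> j})"
    then obtain e where e: "y = ereal e" "e \<in> {min \<bar>X i - 0\<bar> \<bar>X i - 1\<bar> | i. i \<in> present n s d t} \<union>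
      {\<bar>X i - X j\<bar> | i j. i \<in> present n s d t \<and> j \<in> present n s d t \<and> i \<noteq> j}" by blast
    have "\<delta> \<le> e"
      using e(2)
    proof
      assume "e \<in> {min \<bar>X i - 0\<bar> \<bar>X i - 1\<bar> | i. i \<in> present n s d t}"
      then obtain i where i: "i \<in> present n s d t" "e = min \<bar>X i - 0\<bar> \<bar>X i - 1\<bar>" by blast
      have "X i \<in> U n" using XU i(1) unfolding present_def by auto
      then have x01: "0 < X i" "X i < 1" using Un(1) by auto
      have "\<delta> \<le> X i - 0" using SepU \<open>X i \<in> U n\<close> x01 unfolding SepP_def by blast
      moreover have "\<delta> \<le> 1 - X i" using SepU \<open>X i \<in> U n\<close> x01 unfolding SepP_def by blast
      ultimately show "\<delta> \<le> e" using i x01 by simp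
    next
      assume "e \<in> {\<bar>X i - X j\<bar> | i j. i \<in> present n s d t \<and> j \<in> present n s d t \<and> i \<noteq> j}"
      then obtain i j where ij: "i \<in> present n s d t" "j \<in> present n s d t" "i \<noteq> j" "e = \<bar>X i - X j\<bar>"
        by blast
      have ne: "X i \<noteq> X j" using dist ij by blast
      have inU: "X i \<in> U n" "X j \<in> U n" using XU ij unfolding present_def by auto
      show "\<delta> \<le> e"
      proof (cases "X i < X j")
        case True then show ?thesis using SepU inU ij(4) unfolding SepP_def by auto
      next
        case False then have "X j < X i" using ne by simp
        then show ?thesis using SepU inU ij(4) unfolding SepP_def by auto
      qed
    qed
    then show "ereal \<delta> \<le> y" using e(1) by simp
  qed
  have obj_ge: "ereal \<delta> \<le> objective n s d X"
    unfolding objective_def using dmin_ge by (intro INF_greatest) auto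
  define h where "h = 1 / (real m + 1)"
  have hp: "h > 0" unfolding h_def by simp
  have mh: "(real m + 1) * h = 1" unfolding h_def by simp
  have obj_le: "objective n s d X' \<le> ereal h" if X': "\<forall>i<n. X' i \<in> {0..1}" for X'
  proof -
    have "objective n s d X' \<le> dmin n s d t0 X'"
      unfolding objective_def using t0(1) by (intro INF_lower) simp
    also have "dmin n s d t0 X' \<le> ereal h"
    proof (rule ccontr)
      define P where "P = present n s d t0"
      define Z where "Z = {min \<bar>X' i - 0\<bar> \<bar>X' i - 1\<bar> | i. i \<in> P} \<union>
          {\<bar>X' i - X' j\<bar> | i j. i \<in> P \<and> j \<in> P \<and> i \<noteq> j}"
      assume "\<not> dmin n s d t0 X' \<le> ereal h"
      then have "ereal h < Inf (ereal ` Z)" unfolding dmin_def Z_def P_def by simp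
      note hInf = this
      have Zgt: "h < e" if eZ: "e \<in> Z" for e
      proof -
        have "ereal e \<in> ereal ` Z" using eZ by blast
        then have "Inf (ereal ` Z) \<le> ereal e" by (rule Inf_lower)
        then have "ereal h < ereal e" using hInf by (rule order.strict_trans2[rotated])
        then show ?thesis by simp
      qed
      have bnd: "h < X' i \<and> X' i < 1 - h" if "i \<in> P" for i
      proof -
        have "h < min \<bar>X' i - 0\<bar> \<bar>X' i - 1\<bar>" using Zgt that unfolding Z_def by blast
        moreover have "X' i \<in> {0..1}" using X' that unfolding P_def present_def by auto
        ultimately show ?thesis by auto
      qed
      have pw: "h < \<bar>X' i - X' j\<bar>" if "i \<in> P" "j \<in> P" "i \<noteq> j" for i j
        using Zgt that unfolding Z_def by blast
      have inj: "inj_on X' P"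
      proof (rule inj_onI)
        fix i j assume "i \<in> P" "j \<in> P" "X' i = X' j"
        then show "i = j" using pw hp by fastforce
      qed
      define V where "V = X' ` P"
      have finP: "finite P" unfolding P_def present_def by simp
      have cV: "card V = m" unfolding V_def using card_image[OF inj] t0(2) P_def by simp
      have finV: "finite V" unfolding V_def using finP by simp
      have Vne: "V \<noteq> {}" using cV mr by auto
      have "real (card V) * h \<le> Max V"
      proof (rule pack[OF finV Vne])
        show "\<forall>v\<in>V. h \<le> v" unfolding V_def using bnd by fastforce
        show "\<forall>v\<in>V. \<forall>w\<in>V. v \<noteq> w \<longrightarrow> h \<le> \<bar>v - w\<bar>" unfolding V_def using pw by fastforce
      qed
      moreover have "Max V < 1 - h" using Max_in[OF finV Vne] bnd unfolding V_def by fastforce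
      ultimately have "real m * h + h < 1" using cV by simp
      then show False using mh by (simp add: algebra_simps)
    qed
    finally show ?thesis .
  qed
  have "OPT_A n s d \<le> ereal h"
    unfolding OPT_A_def using obj_le by (intro SUP_least) auto
  also have "ereal h = ereal (2 * sigma_r r) * ereal \<delta>"
  proof -
    have ne: "2 * \<sigma> \<noteq> 0" using sp by simp
    have "2 * \<sigma> * \<delta> = (2 * \<sigma>) / (2 * \<sigma> * (real m + 1))" unfolding \<delta>_def by simp
    also have "\<dots> = h" unfolding h_def by (rule nonzero_divide_mult_cancel_left[OF ne])
    finally show ?thesis unfolding \<sigma>_def by simp
  qed
  also have "\<dots> \<le> ereal (2 * sigma_r r) * objective n s d X"
    using obj_ge sp \<sigma>_def by (intro ereal_mult_left_mono) auto
  finally show ?thesis .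
qed


end
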